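(* Let $G$ be a non-complete double-critical $k$-chromatic graph. For every vertex $x\in V(G)$, the minimum degree of the neighbourhood graph $G_x$ is at least $k-2$, i.e. $\delta(G_x)\ge k-2$.
   Context: All graphs are finite and simple. A graph $G$ is (vertex-)critical if $\chi(G-v)<\chi(G)$ for every vertex $v\in V(G)$. A critical graph $G$ is double-critical if $\chi(G-x-y)\le\chi(G)-2$ for every edge $xy\in E(G)$. For a vertex $x$, $G_x:=G[N(x)]$ denotes the subgraph induced by the (open) neighbourhood of $x$. *)

theory Defs
  imports Main
begin

definition simple_graph :: "'a set \<Rightarrow> ('a \<Rightarrow> 'a \<Rightarrow> bool) \<Rightarrow> bool" where
  "simple_graph V E \<longleftrightarrow> finite V \<and> (\<forall>x y. E x y \<longrightarrow> E y x) \<and> (\<forall>x. \<not> E x x)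
     \<and> (\<forall>x y. E x y \<longrightarrow> x \<in> V \<and> y \<in> V)"

text \<open>Subgraphs are taken as induced subgraphs on a vertex subset W of V,
  i.e. the graph (W, E restricted to W).\<close>
definition proper_colouring :: "'a set \<Rightarrow> ('a \<Rightarrow> 'a \<Rightarrow> bool) \<Rightarrow> nat \<Rightarrow> ('a \<Rightarrow> nat) \<Rightarrow> bool" where
  "proper_colouring W E k c \<longleftrightarrow> (\<forall>v\<in>W. c v < k) \<and> (\<forall>u\<in>W. \<forall>v\<in>W. E u v \<longrightarrow> c u \<noteq> c v)"

definition chi :: "'a set \<Rightarrow> ('a \<Rightarrow> 'a \<Rightarrow> bool) \<Rightarrow> nat" where
  "chi W E = (LEAST k. \<exists>c. proper_colouring W E k c)"

definition neighbours :: "'a set \<Rightarrow> ('a \<Rightarrow> 'a \<Rightarrow> bool) \<Rightarrow> 'a \<Rightarrow> 'a set" where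
  "neighbours V E x = {y \<in> V. E x y}"

definition complete_graph :: "'a set \<Rightarrow> ('a \<Rightarrow> 'a \<Rightarrow> bool) \<Rightarrow> bool" where
  "complete_graph V E \<longleftrightarrow> (\<forall>x\<in>V. \<forall>y\<in>V. x \<noteq> y \<longrightarrow> E x y)"

definition vertex_critical :: "'a set \<Rightarrow> ('a \<Rightarrow> 'a \<Rightarrow> bool) \<Rightarrow> bool" where
  "vertex_critical V E \<longleftrightarrow> (\<forall>v\<in>V. chi (V - {v}) E < chi V E)"

definition double_critical :: "'a set \<Rightarrow> ('a \<Rightarrow> 'a \<Rightarrow> bool) \<Rightarrow> bool" where
  "double_critical V E \<longleftrightarrow> vertex_critical V E \<and>
     (\<forall>x\<in>V. \<forall>y\<in>V. E x y \<longrightarrow> chi (V - {x, y}) E + 2 \<le> chi V E)"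

end

theory Submission
  imports Defs
begin

lemma chi_exists:
  assumes "finite W" and irr: "\<And>a. \<not> E a a"
  shows "\<exists>c. proper_colouring W E (chi W E) c"
proof -
  obtain f :: "'a \<Rightarrow> nat" and n where f: "f ` W = {i. i<n}" "inj_on f W"
    using finite_imp_inj_to_nat_seg[OF assms(1)] by blast
  have "proper_colouring W E n f"
    unfolding proper_colouring_def
  proof (intro conjI ballI impI)
    fix v assume "v \<in> W" then show "f v < n" using f(1) by blast
  next
    fix u v assume "u \<in> W" "v \<in> W" "E u v"
    then show "f u \<noteq> f v" using f(2) irr unfolding inj_on_def by metis
  qed
  then have "\<exists>k c. proper_colouring W E k c" by blast
  then show ?thesis unfolding chi_def
    by (rule LeastI_ex[where P="\<lambda>k. \<exists>c. proper_colouring W E k c"])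
qed

lemma chi_le:
  assumes "proper_colouring W E k c"
  shows "chi W E \<le> k"
  unfolding chi_def
  by (rule Least_le[where P="\<lambda>k. \<exists>c. proper_colouring W E k c"]) (use assms in blast)

theorem proposition6:
  fixes V :: "'a set" and E :: "'a \<Rightarrow> 'a \<Rightarrow> bool" and k :: nat
  assumes "simple_graph V E"
    and "double_critical V E"
    and "chi V E = k"
    and "\<not> complete_graph V E"
    and "x \<in> V"
  shows "\<forall>y \<in> neighbours V E x.
           k - 2 \<le> card (neighbours V E y \<inter> neighbours V E x)"
proof
  fix y assume "y \<in> neighbours V E x"
  then have yV: "y \<in> V" and xy: "E x y" by (auto simp: neighbours_def)
  have fin: "finite V" and sym: "\<And>a b. E a b \<Longrightarrow> E b a" and irr: "\<And>a. \<not> E a a"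
    and inV: "\<And>a b. E a b \<Longrightarrow> a \<in> V \<and> b \<in> V"
    using assms(1) unfolding simple_graph_def by auto
  have xney: "x \<noteq> y" using xy irr by blast
  define W where "W = V - {x, y}"
  define m where "m = chi W E"
  have dc: "\<forall>x\<in>V. \<forall>y\<in>V. E x y \<longrightarrow> chi (V - {x, y}) E + 2 \<le> chi V E"
    using assms(2) unfolding double_critical_def by (rule conjunct2)
  have mk: "m + 2 \<le> k" unfolding m_def W_def assms(3)[symmetric] using dc assms(5) yV xy by simp
  obtain c where c: "proper_colouring W E m c"
    unfolding m_def by (rule exE[OF chi_exists[of W E]]) (use fin irr W_def in auto)
  have cl: "\<forall>v\<in>W. c v < m" and cp: "\<forall>u\<in>W. \<forall>v\<in>W. E u v \<longrightarrow> c u \<noteq> c v"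
    using c unfolding proper_colouring_def by auto
  have claim: "\<exists>v\<in>W. c v = i \<and> E x v \<and> E y v" if im: "i < m" for i
  proof (rule ccontr)
    assume no: "\<not> (\<exists>v\<in>W. c v = i \<and> E x v \<and> E y v)"
    define c' where "c' v = (if v = x then i else if v = y then m
        else if v \<in> W \<and> c v = i \<and> E x v then m else c v)" for v
    have "proper_colouring V E (m+1) c'"
      unfolding proper_colouring_def
    proof (intro conjI ballI impI)
      fix v assume "v \<in> V" then show "c' v < m + 1"
        using cl[rule_format, of v] im unfolding c'_def W_def by auto
    next
      fix u v assume u: "u \<in> V" and v: "v \<in> V" and e: "E u v"
      have uv: "u \<noteq> v" using e irr by blast
      show "c' u \<noteq> c' v"
      proof (cases "u \<in> W \<and> v \<in> W")
        case True
        then have nx: "u \<noteq> x" "u \<noteq> y" "v \<noteq> x" "v \<noteq> y" unfolding W_def by auto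
        have cu: "c u < m" "c v < m" "c u \<noteq> c v" using True cl cp e by auto
        show ?thesis unfolding c'_def using nx cu True by auto
      next
        case False
        then have "u = x \<or> u = y \<or> v = x \<or> v = y" using u v unfolding W_def by auto
        then show ?thesis using cl im e no sym uv xney u v unfolding c'_def W_def
          by (auto split: if_splits)
      qed
    qed
    then have "chi V E \<le> m + 1" by (rule chi_le)
    then show False using mk assms(3) by simp
  qed
  have km: "k \<le> m + 2"
  proof -
    define d where "d v = (if v = x then m else if v = y then m + 1 else c v)" for v
    have "proper_colouring V E (m+2) d"
      unfolding proper_colouring_def
    proof (intro conjI ballI impI)
      fix v assume "v \<in> V" then show "d v < m + 2"
        using cl[rule_format, of v] unfolding d_def W_def by auto
    next
      fix u v assume u: "u \<in> V" and v: "v \<in> V" and e: "E u v"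
      have uv: "u \<noteq> v" using e irr by blast
      show "d u \<noteq> d v"
        using cl[rule_format, of u] cl[rule_format, of v] cp[rule_format, of u v] u v e uv xney
        unfolding d_def W_def by auto
    qed
    then have "chi V E \<le> m + 2" by (rule chi_le)
    then show ?thesis using assms(3) by simp
  qed
  define S where "S = neighbours V E y \<inter> neighbours V E x"
  have "{..<m} \<subseteq> c ` S"
  proof
    fix i assume "i \<in> {..<m}"
    then obtain v where "v \<in> W" "c v = i" "E x v" "E y v" using claim by auto
    then show "i \<in> c ` S" unfolding S_def neighbours_def W_def by auto
  qed
  then have "m \<le> card (c ` S)"
  proof -
    have "finite S" using fin unfolding S_def neighbours_def by auto
    then have "card {..<m} \<le> card (c ` S)" using \<open>{..<m} \<subseteq> c ` S\<close> by (intro card_mono) auto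
    then show ?thesis by simp
  qed
  also have "\<dots> \<le> card S" by (rule card_image_le) (simp add: S_def neighbours_def fin)
  finally show "k - 2 \<le> card (neighbours V E y \<inter> neighbours V E x)"
    using km unfolding S_def by linarith
qed

end
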